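(* Let $p\in\mathbb{R}^3$ and suppose that the Hugoniot curve $\mathcal{H}(p)$ meets the characteristic plane $\mathcal{C}$ in two distinct points $q_0$ and $q_1$. Then one of these points lies in $\mathcal{C}_s$ and the other lies in $\mathcal{C}_f$. Moreover, the value of $\sigma$ at the point lying in $\mathcal{C}_s$ is strictly smaller than the value of $\sigma$ at the point lying in $\mathcal{C}_f$.
   Context: Fix real constants $a_1,a_2,a_3,a_4$ and $b_1>1$, and put $c=a_3-a_2$, assumed $>0$. The model is the system $W_t+F(W)_x=0$, $W=(u,v)$, with flux $F=(f,g)$, $f(u,v)=(b_1+1)u^2/2+v^2/2+a_1u+a_2v$, $g(u,v)=uv+a_3u+a_4v$. We work in coordinates $(z,\tau,Y)\in\mathbb{R}^3$ (a chart of the wave manifold). Define $\widetilde U(z,\tau)=\frac{2cz}{z^2+1}+c\tau(z^2-1)$, $V_1(z,\tau)=\frac{c}{z^2+1}+c\tau z$, $U=(\widetilde U-a_1+a_4)/b_1$, $V=V_1-a_3$. The point $(z,\tau,Y)$ represents the shock with left state $W(z,\tau,Y)=(U+zY/2,\;V+Y/2)$ and right state $W'(z,\tau,Y)=(U-zY/2,\;V-Y/2)$, with shock speed $\sigma(z,\tau,Y)=\frac{c}{b_1}[(b_1+1)z^2-1]\tau+\frac{c}{b_1}\frac{(b_1+2)z}{z^2+1}+\sigma_0$, where $\sigma_0=[(b_1+1)a_4-a_1]/b_1$. For $p\in\mathbb{R}^3$, the Hugoniot curve is $\mathcal{H}(p)=\{q\in\mathbb{R}^3: W(q)=W(p)\}$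 and the Hugoniot$'$ curve is $\mathcal{H}'(p)=\{q: W'(q)=W'(p)\}$ (each is the graph of a function of $z\in\mathbb{R}$). The characteristic plane is $\mathcal{C}=\{Y=0\}$, with $\mathcal{C}_s=\{Y=0,\tau<0\}$ and $\mathcal{C}_f=\{Y=0,\tau>0\}$. *)

theory Defs
  imports Complex_Main
begin

text \<open>Points of the chart are triples (z, tau, Y) :: real \<times> real \<times> real.
  The model constants a1 a2 a3 a4 b1 are passed explicitly; c = a3 - a2.\<close>

definition Utilde :: "real \<Rightarrow> real \<Rightarrow> real \<Rightarrow> real \<Rightarrow> real" where
  "Utilde a2 a3 z \<tau> = 2 * (a3 - a2) * z / (z^2 + 1) + (a3 - a2) * \<tau> * (z^2 - 1)"

definition V1 :: "real \<Rightarrow> real \<Rightarrow> real \<Rightarrow> real \<Rightarrow> real" where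
  "V1 a2 a3 z \<tau> = (a3 - a2) / (z^2 + 1) + (a3 - a2) * \<tau> * z"

definition Ufun :: "real \<Rightarrow> real \<Rightarrow> real \<Rightarrow> real \<Rightarrow> real \<Rightarrow> real \<Rightarrow> real \<Rightarrow> real" where
  "Ufun a1 a2 a3 a4 b1 z \<tau> = (Utilde a2 a3 z \<tau> - a1 + a4) / b1"

definition Vfun :: "real \<Rightarrow> real \<Rightarrow> real \<Rightarrow> real \<Rightarrow> real" where
  "Vfun a2 a3 z \<tau> = V1 a2 a3 z \<tau> - a3"

definition Wl :: "real \<Rightarrow> real \<Rightarrow> real \<Rightarrow> real \<Rightarrow> real \<Rightarrow> real \<times> real \<times> real \<Rightarrow> real \<times> real" where
  "Wl a1 a2 a3 a4 b1 p = (case p of (z, \<tau>, Y) \<Rightarrow>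
     (Ufun a1 a2 a3 a4 b1 z \<tau> + z * Y / 2, Vfun a2 a3 z \<tau> + Y / 2))"

definition Wr :: "real \<Rightarrow> real \<Rightarrow> real \<Rightarrow> real \<Rightarrow> real \<Rightarrow> real \<times> real \<times> real \<Rightarrow> real \<times> real" where
  "Wr a1 a2 a3 a4 b1 p = (case p of (z, \<tau>, Y) \<Rightarrow>
     (Ufun a1 a2 a3 a4 b1 z \<tau> - z * Y / 2, Vfun a2 a3 z \<tau> - Y / 2))"

definition shock_speed :: "real \<Rightarrow> real \<Rightarrow> real \<Rightarrow> real \<Rightarrow> real \<Rightarrow> real \<times> real \<times> real \<Rightarrow> real" where
  "shock_speed a1 a2 a3 a4 b1 p = (case p of (z, \<tau>, Y) \<Rightarrow>
     (a3 - a2) / b1 * ((b1 + 1) * z^2 - 1) * \<tau>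
     + (a3 - a2) / b1 * ((b1 + 2) * z / (z^2 + 1))
     + ((b1 + 1) * a4 - a1) / b1)"

definition hugoniot :: "real \<Rightarrow> real \<Rightarrow> real \<Rightarrow> real \<Rightarrow> real \<Rightarrow> real \<times> real \<times> real \<Rightarrow> (real \<times> real \<times> real) set" where
  "hugoniot a1 a2 a3 a4 b1 p = {q. Wl a1 a2 a3 a4 b1 q = Wl a1 a2 a3 a4 b1 p}"

definition char_plane :: "(real \<times> real \<times> real) set" where
  "char_plane = {(z, \<tau>, Y). Y = 0}"

definition char_plane_s :: "(real \<times> real \<times> real) set" where
  "char_plane_s = {(z, \<tau>, Y). Y = 0 \<and> \<tau> < 0}"

definition char_plane_f :: "(real \<times> real \<times> real) set" where
  "char_plane_f = {(z, \<tau>, Y). Y = 0 \<and> \<tau> > 0}"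

end

theory Submission
  imports Defs
begin

lemma key:
  fixes z t al be :: real
  assumes E1: "2*z/(z^2+1) + t*(z^2-1) = al" and E2: "1/(z^2+1) + t*z = be"
  shows "t*(1+z^2) = 2*be*z - al" and "be*z^2 - al*z + 1 - be = 0"
proof -
  have pz: "z^2+1 > 0" by (smt (verit) zero_le_power2)
  have a: "2*z + t*(z^2-1)*(z^2+1) = al*(z^2+1)" using E1 pz by (simp add: field_simps)
  have b: "1 + t*z*(z^2+1) = be*(z^2+1)" using E2 pz by (simp add: field_simps)
  have "(t*(1+z^2) - (2*be*z - al))*(z^2+1) = (al*(z^2+1) - (2*z + t*(z^2-1)*(z^2+1))) - 2*z*(be*(z^2+1) - (1 + t*z*(z^2+1)))"
    by (simp add: algebra_simps power2_eq_square)
  also have "... = 0" using a b by simp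
  finally show tt: "t*(1+z^2) = 2*be*z - al" using pz by simp
  have "be*z^2 - al*z + 1 - be = -(be*(z^2+1) - (1 + t*z*(z^2+1))) - z*(t*(1+z^2) - (2*be*z - al))"
    by (simp add: algebra_simps power2_eq_square)
  also have "... = 0" using b tt by simp
  finally show "be*z^2 - al*z + 1 - be = 0" .
qed

theorem proposition1:
  fixes a1 a2 a3 a4 b1 :: real and p q0 q1 :: "real \<times> real \<times> real"
  assumes "b1 > 1" and "a3 - a2 > 0"
    and "hugoniot a1 a2 a3 a4 b1 p \<inter> char_plane = {q0, q1}"
    and "q0 \<noteq> q1"
  shows "(q0 \<in> char_plane_s \<and> q1 \<in> char_plane_f \<and>
            shock_speed a1 a2 a3 a4 b1 q0 < shock_speed a1 a2 a3 a4 b1 q1)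
       \<or> (q1 \<in> char_plane_s \<and> q0 \<in> char_plane_f \<and>
            shock_speed a1 a2 a3 a4 b1 q1 < shock_speed a1 a2 a3 a4 b1 q0)"
proof -
  define c where "c = a3 - a2"
  have c: "c > 0" using assms(2) c_def by simp
  obtain z0 t0 y0 where q0: "q0 = (z0,t0,y0)" by (cases q0) auto
  obtain z1 t1 y1 where q1: "q1 = (z1,t1,y1)" by (cases q1) auto
  have m0: "q0 \<in> hugoniot a1 a2 a3 a4 b1 p \<inter> char_plane" using assms(3) by auto
  have m1: "q1 \<in> hugoniot a1 a2 a3 a4 b1 p \<inter> char_plane" using assms(3) by auto
  have y0: "y0 = 0" using m0 q0 by (simp add: char_plane_def)
  have y1: "y1 = 0" using m1 q1 by (simp add: char_plane_def)
  have W: "Wl a1 a2 a3 a4 b1 q0 = Wl a1 a2 a3 a4 b1 q1" using m0 m1 by (simp add: hugoniot_def)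
  have eU: "Utilde a2 a3 z0 t0 = Utilde a2 a3 z1 t1" and eV: "V1 a2 a3 z0 t0 = V1 a2 a3 z1 t1"
    using W assms(1) by (simp_all add: Wl_def q0 q1 y0 y1 Ufun_def Vfun_def divide_cancel_right)
  define al where "al = 2*z0/(z0^2+1) + t0*(z0^2-1)"
  define be where "be = 1/(z0^2+1) + t0*z0"
  have E10: "2*z0/(z0^2+1) + t0*(z0^2-1) = al" by (simp add: al_def)
  have E20: "1/(z0^2+1) + t0*z0 = be" by (simp add: be_def)
  have "c * (2*z1/(z1^2+1) + t1*(z1^2-1)) = c * al"
    using eU unfolding al_def Utilde_def c_def[symmetric] by (simp add: algebra_simps)
  then have E11: "2*z1/(z1^2+1) + t1*(z1^2-1) = al" using c by simp
  have "c * (1/(z1^2+1) + t1*z1) = c * be"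
    using eV unfolding be_def V1_def c_def[symmetric] by (simp add: algebra_simps)
  then have E21: "1/(z1^2+1) + t1*z1 = be" using c by simp
  note k0 = key[OF E10 E20] and k1 = key[OF E11 E21]
  have zne: "z0 \<noteq> z1"
  proof
    assume "z0 = z1"
    then have "t0*(1+z0^2) = t1*(1+z0^2)" using k0(1) k1(1) by simp
    moreover have "1+z0^2 > 0" by (smt (verit) zero_le_power2)
    ultimately have "t0 = t1" by simp
    then show False using assms(4) q0 q1 y0 y1 \<open>z0 = z1\<close> by simp
  qed
  have "(z0 - z1)*(be*(z0+z1) - al) = 0" using k0(2) k1(2) by (simp add: algebra_simps power2_eq_square) 
  then have al: "al = be*(z0+z1)" using zne by simp
  have one: "be*(1 + z0*z1) = 1" using k0(2) al by (simp add: algebra_simps power2_eq_square)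
  have bne: "be \<noteq> 0" using one by auto
  have p0: "1+z0^2 > 0" and p1: "1+z1^2 > 0" by (smt (verit) zero_le_power2)+
  have t0e: "t0*(1+z0^2) = be*(z0-z1)" using k0(1) al by (simp add: algebra_simps)
  have t1e: "t1*(1+z1^2) = be*(z1-z0)" using k1(1) al by (simp add: algebra_simps)
  have g0: "((b1+1)*z0^2-1)*t0 + (b1+2)*z0/(z0^2+1) = be*((b1+1)*z0+z1)"
  proof -
    have pp: "z0^2+1 > 0" by (smt (verit) zero_le_power2)
    have "(((b1+1)*z0^2-1)*t0 + (b1+2)*z0/(z0^2+1))*(z0^2+1)
        = ((b1+1)*z0^2-1)*(t0*(1+z0^2)) + (b1+2)*z0"
      using pp by (simp add: field_simps)
    also have "... = ((b1+1)*z0^2-1)*(be*(z0-z1)) + (b1+2)*z0*(be*(1 + z0*z1))"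
      using t0e one by simp
    also have "... = be*((b1+1)*z0+z1)*(z0^2+1)"
      by (simp add: algebra_simps power2_eq_square)
    finally show ?thesis using pp by simp
  qed
  have g1: "((b1+1)*z1^2-1)*t1 + (b1+2)*z1/(z1^2+1) = be*((b1+1)*z1+z0)"
  proof -
    have pp: "z1^2+1 > 0" by (smt (verit) zero_le_power2)
    have "(((b1+1)*z1^2-1)*t1 + (b1+2)*z1/(z1^2+1))*(z1^2+1)
        = ((b1+1)*z1^2-1)*(t1*(1+z1^2)) + (b1+2)*z1"
      using pp by (simp add: field_simps)
    also have "... = ((b1+1)*z1^2-1)*(be*(z1-z0)) + (b1+2)*z1*(be*(1 + z0*z1))"
      using t1e one by simp
    also have "... = be*((b1+1)*z1+z0)*(z1^2+1)"
      by (simp add: algebra_simps power2_eq_square)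
    finally show ?thesis using pp by simp
  qed
  define K where "K = ((b1 + 1) * a4 - a1) / b1"
  have s0: "shock_speed a1 a2 a3 a4 b1 q0 = c/b1 * (be*((b1+1)*z0+z1)) + K"
  proof -
    have "shock_speed a1 a2 a3 a4 b1 q0 = c/b1 * (((b1+1)*z0^2-1)*t0 + (b1+2)*z0/(z0^2+1)) + K"
      unfolding shock_speed_def q0 K_def c_def by (simp add: distrib_left mult.assoc)
    then show ?thesis using g0 by simp
  qed
  have s1: "shock_speed a1 a2 a3 a4 b1 q1 = c/b1 * (be*((b1+1)*z1+z0)) + K"
  proof -
    have "shock_speed a1 a2 a3 a4 b1 q1 = c/b1 * (((b1+1)*z1^2-1)*t1 + (b1+2)*z1/(z1^2+1)) + K"
      unfolding shock_speed_def q1 K_def c_def by (simp add: distrib_left mult.assoc)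
    then show ?thesis using g1 by simp
  qed
  have diff: "shock_speed a1 a2 a3 a4 b1 q1 - shock_speed a1 a2 a3 a4 b1 q0 = c*(be*(z1-z0))"
  proof -
    have "shock_speed a1 a2 a3 a4 b1 q1 - shock_speed a1 a2 a3 a4 b1 q0
        = c/b1 * (b1 * (be*(z1-z0)))" unfolding s0 s1 by (simp add: algebra_simps)
    also have "... = c*(be*(z1-z0))" using assms(1) by simp
    finally show ?thesis .
  qed
  have nz: "be*(z0-z1) \<noteq> 0" using bne zne by simp
  show ?thesis
  proof (cases "be*(z0-z1) < 0")
    case True
    then have "t0*(1+z0^2) < 0" using t0e by simp
    then have "t0 < 0" using p0 by (auto simp: mult_less_0_iff)
    moreover have "t1*(1+z1^2) > 0" using t1e True by (simp add: algebra_simps)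
    then have "t1 > 0" using p1 by (auto simp: zero_less_mult_iff)
    moreover have "be*(z1-z0) > 0" using True by (simp add: right_diff_distrib)
    then have "c*(be*(z1-z0)) > 0" using c by simp
    ultimately show ?thesis using diff q0 q1 y0 y1
      by (simp add: char_plane_s_def char_plane_f_def)
  next
    case False
    then have F: "be*(z0-z1) > 0" using nz by linarith
    then have "t0*(1+z0^2) > 0" using t0e by simp
    then have "t0 > 0" using p0 by (auto simp: zero_less_mult_iff)
    moreover have "t1*(1+z1^2) < 0" using t1e F by (simp add: algebra_simps)
    then have "t1 < 0" using p1 by (auto simp: mult_less_0_iff)
    moreover have "be*(z1-z0) < 0" using F by (simp add: right_diff_distrib)
    then have "c*(be*(z1-z0)) < 0" using c by (simp add: mult_pos_neg)
    ultimately show ?thesis using diff q0 q1 y0 y1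
      by (simp add: char_plane_s_def char_plane_f_def)
  qed
qed

end
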